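(* Let $t\ge 2$ be an integer and let $0\le i<j<k\le t-2$ be integers. Let $p_i\in D_i$, $p_j\in D_j$, $p_k\in D_k$. Then $(p_i,p_j,p_k)$ is a right turn (i.e., the three points are in clockwise orientation).
   Context: Let $t\ge 2$ be an integer. For $0\le i\le t-3$ define the vector $v_i:=(3(t-i),-3i)$, and define points $w_0:=(0,0)$ and $w_{i+1}:=w_i+v_i$ for $i=0,\dots,t-3$. For $i=0,\dots,t-2$, let $C_i$ be the closed unit square whose lower left corner is $w_i$, and let $D_i:=\{((t+1)4^{t+1}x,\,(t+1)4^{t+1}y):(x,y)\in C_i\}$ be $C_i$ scaled by the factor $(t+1)4^{t+1}$. *)

theory Defs
  imports Complex_Main
begin

definition vstep :: "nat \<Rightarrow> nat \<Rightarrow> real \<times> real" where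
  "vstep t i = (3 * (real t - real i), - 3 * real i)"

fun wpt :: "nat \<Rightarrow> nat \<Rightarrow> real \<times> real" where
  "wpt t 0 = (0, 0)"
| "wpt t (Suc i) = (fst (wpt t i) + fst (vstep t i), snd (wpt t i) + snd (vstep t i))"

definition Csq :: "nat \<Rightarrow> nat \<Rightarrow> (real \<times> real) set" where
  "Csq t i = {(x, y). fst (wpt t i) \<le> x \<and> x \<le> fst (wpt t i) + 1 \<and>
                      snd (wpt t i) \<le> y \<and> y \<le> snd (wpt t i) + 1}"

definition scalefac :: "nat \<Rightarrow> real" where
  "scalefac t = (real t + 1) * 4 ^ (t + 1)"

definition Dsq :: "nat \<Rightarrow> nat \<Rightarrow> (real \<times> real) set" where
  "Dsq t i = {(scalefac t * x, scalefac t * y) | x y. (x, y) \<in> Csq t i}"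

definition right_turn :: "real \<times> real \<Rightarrow> real \<times> real \<Rightarrow> real \<times> real \<Rightarrow> bool" where
  "right_turn p q r \<longleftrightarrow>
     (fst q - fst p) * (snd r - snd p) - (snd q - snd p) * (fst r - fst p) < 0"

end

theory Submission
  imports Defs
begin

lemma wpt_closed:
  "wpt t n = (3 * (real t * real n - real n * (real n - 1) / 2), - 3 * (real n * (real n - 1) / 2))"
  by (induction n) (auto simp: vstep_def field_simps)

definition cr :: "real \<times> real \<Rightarrow> real \<times> real \<Rightarrow> real \<times> real \<Rightarrow> real" where
  "cr p q r = (fst q - fst p) * (snd r - snd p) - (snd q - snd p) * (fst r - fst p)"

lemma unit_cross_le: "0 \<le> (a::real) \<Longrightarrow> a \<le> 1 \<Longrightarrow> 0 \<le> b \<Longrightarrow> b \<le> 1 \<Longrightarrow> 0 \<le> c \<Longrightarrow> c \<le> 1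
  \<Longrightarrow> 0 \<le> d \<Longrightarrow> d \<le> 1 \<Longrightarrow> a * d - b * c \<le> 1"
proof -
  assume h: "0 \<le> (a::real)" "a \<le> 1" "0 \<le> b" "b \<le> 1" "0 \<le> c" "c \<le> 1" "0 \<le> d" "d \<le> 1"
  have "a * d \<le> 1 * 1" using h by (intro mult_mono) auto
  moreover have "0 \<le> b * c" using h by simp
  ultimately show ?thesis by simp
qed

lemma lin_le: "0 \<le> (a::real) \<Longrightarrow> a \<le> 1 \<Longrightarrow> 0 \<le> b \<Longrightarrow> b \<le> 1 \<Longrightarrow> 0 \<le> X \<Longrightarrow> 0 \<le> Y
  \<Longrightarrow> a * X + b * Y \<le> X + Y"
proof -
  assume h: "0 \<le> (a::real)" "a \<le> 1" "0 \<le> b" "b \<le> 1" "0 \<le> X" "0 \<le> Y"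
  have "a * X \<le> 1 * X" using h by (intro mult_right_mono) auto
  moreover have "b * Y \<le> 1 * Y" using h by (intro mult_right_mono) auto
  ultimately show ?thesis by simp
qed

lemma core:
  fixes t a b c :: real and al be ga de ep ze :: real
  assumes t2: "t \<ge> 2" and a0: "a \<ge> 0" and ab: "a + 1 \<le> b" and bc: "b + 1 \<le> c" and ct: "c \<le> t"
    and e: "0 \<le> al" "al \<le> 1" "0 \<le> be" "be \<le> 1" "0 \<le> ga" "ga \<le> 1" "0 \<le> de" "de \<le> 1"
       "0 \<le> ep" "ep \<le> 1" "0 \<le> ze" "ze \<le> 1"
  defines "X \<equiv> \<lambda>n. 3 * (t * n - n * (n - 1) / 2)" and "Y \<equiv> \<lambda>n. - 3 * (n * (n - 1) / 2)"
  shows "cr (X a + al, Y a + be) (X b + ga, Y b + de) (X c + ep, Y c + ze) < 0"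
proof -
  define xa where "xa = X a" define xb where "xb = X b" define xc where "xc = X c"
  define ya where "ya = Y a" define yb where "yb = Y b" define yc where "yc = Y c"
  have id: "cr (xa + al, ya + be) (xb + ga, yb + de) (xc + ep, yc + ze) =
     cr (xa, ya) (xb, yb) (xc, yc)
     + (al * (yb - yc) + be * (xc - xb))
     + (ga * (yc - ya) - de * (xc - xa))
     + (ep * (ya - yb) + ze * (xb - xa))
     + (al * de - be * ga) + (ga * ze - de * ep) + (ep * be - ze * al)"
    unfolding cr_def by (simp add: algebra_simps)
  have crW: "cr (xa, ya) (xb, yb) (xc, yc) = - 9 * t * (b - a) * (c - a) * (c - b) / 2"
    unfolding cr_def xa_def xb_def xc_def ya_def yb_def yc_def X_def Y_def
    by (simp add: algebra_simps divide_simps)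
  have d1: "yb - yc = 3 * ((c - b) * (b + c - 1) / 2)"
    unfolding yb_def yc_def Y_def by (simp add: algebra_simps divide_simps)
  have d2: "xc - xb = 3 * ((c - b) * (t - (b + c - 1) / 2))"
    unfolding xb_def xc_def X_def by (simp add: algebra_simps divide_simps)
  have d3: "ya - yb = 3 * ((b - a) * (a + b - 1) / 2)"
    unfolding ya_def yb_def Y_def by (simp add: algebra_simps divide_simps)
  have d4: "xb - xa = 3 * ((b - a) * (t - (a + b - 1) / 2))"
    unfolding xb_def xa_def X_def by (simp add: algebra_simps divide_simps)
  have d5: "yc - ya = - 3 * ((c - a) * (a + c - 1) / 2)"
    unfolding yc_def ya_def Y_def by (simp add: algebra_simps divide_simps)
  have d6: "xc - xa = 3 * ((c - a) * (t - (a + c - 1) / 2))"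
    unfolding xc_def xa_def X_def by (simp add: algebra_simps divide_simps)
  have n1: "yb - yc \<ge> 0" unfolding d1 using a0 ab bc by (intro mult_nonneg_nonneg) auto
  have n2: "xc - xb \<ge> 0" unfolding d2 using a0 ab bc ct by (intro mult_nonneg_nonneg) auto
  have n3: "ya - yb \<ge> 0" unfolding d3 using a0 ab bc by (intro mult_nonneg_nonneg) auto
  have n4: "xb - xa \<ge> 0" unfolding d4 using a0 ab bc ct by (intro mult_nonneg_nonneg) auto
  have n5: "yc - ya \<le> 0" unfolding d5 using a0 ab bc
    by (simp add: mult_nonneg_nonneg)
  have n6: "xc - xa \<ge> 0" unfolding d6 using a0 ab bc ct by (intro mult_nonneg_nonneg) auto
  have s1: "(yb - yc) + (xc - xb) = 3 * t * (c - b)" unfolding d1 d2 by (simp add: algebra_simps)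
  have s2: "(ya - yb) + (xb - xa) = 3 * t * (b - a)" unfolding d3 d4 by (simp add: algebra_simps)
  have L1: "al * (yb - yc) + be * (xc - xb) \<le> 3 * t * (c - b)"
    using lin_le[OF e(1-4) n1 n2] s1 by simp
  have L2: "ga * (yc - ya) - de * (xc - xa) \<le> 0"
  proof -
    have "ga * (yc - ya) \<le> 0" using e n5 by (simp add: mult_nonneg_nonpos)
    moreover have "de * (xc - xa) \<ge> 0" using e n6 by simp
    ultimately show ?thesis by simp
  qed
  have L3: "ep * (ya - yb) + ze * (xb - xa) \<le> 3 * t * (b - a)"
    using lin_le[OF e(9-12) n3 n4] s2 by simp
  have Q1: "al * de - be * ga \<le> 1" using e by (intro unit_cross_le) auto
  have Q2: "ga * ze - de * ep \<le> 1" using e by (intro unit_cross_le) auto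
  have Q3: "ep * be - ze * al \<le> 1" using e by (intro unit_cross_le) auto
  define A where "A = b - a" define B where "B = c - b"
  have crW': "cr (xa, ya) (xb, yb) (xc, yc) = - 9 * t * A * (A + B) * B / 2"
    unfolding crW A_def B_def by (simp add: algebra_simps)
  have L1': "al * (yb - yc) + be * (xc - xb) \<le> 3 * t * B" using L1 B_def by simp
  have L3': "ep * (ya - yb) + ze * (xb - xa) \<le> 3 * t * A" using L3 A_def by simp
  have A1: "A \<ge> 1" "B \<ge> 1" using ab bc A_def B_def by auto
  have AB: "A * B \<ge> 1" using A1 mult_mono[of 1 A 1 B] by simp
  have "t * (A + B) * 1 \<le> t * (A + B) * (A * B)"
    using AB t2 A1 by (intro mult_left_mono) auto
  hence M: "t * A * (A + B) * B \<ge> t * (A + B)" by (simp add: algebra_simps)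
  have T: "t * (A + B) \<ge> 4" using t2 A1 mult_mono[of 2 t 2 "A+B"] by simp
  have "cr (xa + al, ya + be) (xb + ga, yb + de) (xc + ep, yc + ze)
      \<le> - 9 * t * A * (A + B) * B / 2 + 3 * t * (A + B) + 3"
    unfolding id crW' using L1' L2 L3' Q1 Q2 Q3 by (simp add: algebra_simps)
  also have "\<dots> < 0" using M T by simp
  finally show ?thesis unfolding xa_def xb_def xc_def ya_def yb_def yc_def .
qed

theorem lemma6:
  fixes t i j k :: nat and pi pj pk :: "real \<times> real"
  assumes "t \<ge> 2" and "i < j" and "j < k" and "k \<le> t - 2"
    and "pi \<in> Dsq t i" and "pj \<in> Dsq t j" and "pk \<in> Dsq t k"
  shows "right_turn pi pj pk"
proof -
  define s where "s = scalefac t"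
  have s0: "s > 0" unfolding s_def scalefac_def by simp
  define X where "X \<equiv> \<lambda>n::real. 3 * (real t * n - n * (n - 1) / 2)"
  define Y where "Y \<equiv> \<lambda>n::real. - 3 * (n * (n - 1) / 2)"
  have mem: "\<exists>u v. p = (s * (X (real n) + u), s * (Y (real n) + v)) \<and> 0 \<le> u \<and> u \<le> 1 \<and> 0 \<le> v \<and> v \<le> 1"
    if "p \<in> Dsq t n" for p n
  proof -
    from that obtain x y where p: "p = (s * x, s * y)" and xy: "(x, y) \<in> Csq t n"
      unfolding Dsq_def s_def by auto
    show ?thesis
      apply (rule exI[of _ "x - X (real n)"], rule exI[of _ "y - Y (real n)"])
      using xy unfolding p Csq_def wpt_closed X_def Y_def by auto
  qed
  obtain al be where P: "pi = (s * (X (real i) + al), s * (Y (real i) + be))"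
    "0 \<le> al" "al \<le> 1" "0 \<le> be" "be \<le> 1" using mem[OF assms(5)] by blast
  obtain ga de where Q: "pj = (s * (X (real j) + ga), s * (Y (real j) + de))"
    "0 \<le> ga" "ga \<le> 1" "0 \<le> de" "de \<le> 1" using mem[OF assms(6)] by blast
  obtain ep ze where R: "pk = (s * (X (real k) + ep), s * (Y (real k) + ze))"
    "0 \<le> ep" "ep \<le> 1" "0 \<le> ze" "ze \<le> 1" using mem[OF assms(7)] by blast
  have C: "cr (X i + al, Y i + be) (X j + ga, Y j + de) (X k + ep, Y k + ze) < 0"
    unfolding X_def Y_def
    apply (rule core)
    using assms P Q R by auto
  have "right_turn pi pj pk \<longleftrightarrow> s * s * cr (X i + al, Y i + be) (X j + ga, Y j + de) (X k + ep, Y k + ze) < 0"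
    unfolding right_turn_def cr_def P(1) Q(1) R(1) by (simp add: algebra_simps)
  moreover have "s * s * cr (X i + al, Y i + be) (X j + ga, Y j + de) (X k + ep, Y k + ze) < 0"
    using C s0 by (simp add: mult_pos_neg)
  ultimately show ?thesis by simp
qed

end
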